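(* Let $R$ be an integral domain. If $R$ is perinormal, then $R_W$ is perinormal for every multiplicative set $W \subseteq R$. Conversely, if $R_{\mathfrak{m}}$ is perinormal for every maximal ideal $\mathfrak{m}$ of $R$, then $R$ is perinormal.
   Context: All rings are commutative with identity; "local" means having a unique maximal ideal; an overring of a domain $R$ is a ring between $R$ and its fraction field. A ring extension $A \subseteq B$ satisfies going-down if whenever $\mathfrak{p} \subset \mathfrak{q}$ are primes of $A$ and $Q$ is a prime of $B$ with $Q \cap A = \mathfrak{q}$, there is a prime $P \subseteq Q$ of $B$ with $P \cap A = \mathfrak{p}$. A domain $R$ is perinormal if every local overring $S$ of $R$ such that $R \subseteq S$ satisfies going-down is a localization of $R$. *)

theory Defs
  imports Main
begin

text \<open>An integral domain is represented as a subring R of a field 'a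
(every domain embeds in its fraction field). All rings considered
(overrings, localizations) are subrings of the same ambient field.\<close>

definition subring :: "'a::field set \<Rightarrow> bool" where
  "subring S \<longleftrightarrow> 0 \<in> S \<and> 1 \<in> S \<and>
     (\<forall>x\<in>S. \<forall>y\<in>S. x + y \<in> S \<and> x - y \<in> S \<and> x * y \<in> S)"

definition frac :: "'a::field set \<Rightarrow> 'a set" where
  "frac R = {a / b | a b. a \<in> R \<and> b \<in> R \<and> b \<noteq> 0}"

definition ideal_in :: "'a::field set \<Rightarrow> 'a set \<Rightarrow> bool" where
  "ideal_in S I \<longleftrightarrow> I \<subseteq> S \<and> 0 \<in> I \<and>
     (\<forall>x\<in>I. \<forall>y\<in>I. x + y \<in> I) \<and> (\<forall>s\<in>S. \<forall>x\<in>I. s * x \<in> I)"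

definition prime_ideal_in :: "'a::field set \<Rightarrow> 'a set \<Rightarrow> bool" where
  "prime_ideal_in S P \<longleftrightarrow> ideal_in S P \<and> 1 \<notin> P \<and>
     (\<forall>a\<in>S. \<forall>b\<in>S. a * b \<in> P \<longrightarrow> a \<in> P \<or> b \<in> P)"

definition maximal_ideal_in :: "'a::field set \<Rightarrow> 'a set \<Rightarrow> bool" where
  "maximal_ideal_in S M \<longleftrightarrow> ideal_in S M \<and> M \<noteq> S \<and>
     (\<forall>J. ideal_in S J \<and> M \<subseteq> J \<longrightarrow> J = M \<or> J = S)"

definition local_ring :: "'a::field set \<Rightarrow> bool" where
  "local_ring S \<longleftrightarrow> (\<exists>!M. maximal_ideal_in S M)"

definition mult_set :: "'a::field set \<Rightarrow> 'a set \<Rightarrow> bool" where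
  "mult_set R W \<longleftrightarrow> W \<subseteq> R \<and> 1 \<in> W \<and> 0 \<notin> W \<and>
     (\<forall>x\<in>W. \<forall>y\<in>W. x * y \<in> W)"

definition localization :: "'a::field set \<Rightarrow> 'a set \<Rightarrow> 'a set" where
  "localization R W = {a / w | a w. a \<in> R \<and> w \<in> W}"

definition going_down :: "'a::field set \<Rightarrow> 'a set \<Rightarrow> bool" where
  "going_down A B \<longleftrightarrow>
     (\<forall>p q Q. prime_ideal_in A p \<and> prime_ideal_in A q \<and> p \<subset> q \<and>
        prime_ideal_in B Q \<and> Q \<inter> A = q \<longrightarrow>
        (\<exists>P. prime_ideal_in B P \<and> P \<subseteq> Q \<and> P \<inter> A = p))"

definition perinormal :: "'a::field set \<Rightarrow> bool" where
  "perinormal R \<longleftrightarrow> subring R \<and>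
     (\<forall>S. subring S \<and> R \<subseteq> S \<and> S \<subseteq> frac R \<and> local_ring S \<and> going_down R S
        \<longrightarrow> (\<exists>W. mult_set R W \<and> S = localization R W))"

end

theory Submission
  imports Defs
begin


lemma sr: assumes "subring S"
  shows "0 \<in> S" "1 \<in> S" "x \<in> S \<Longrightarrow> y \<in> S \<Longrightarrow> x + y \<in> S"
    "x \<in> S \<Longrightarrow> y \<in> S \<Longrightarrow> x - y \<in> S" "x \<in> S \<Longrightarrow> y \<in> S \<Longrightarrow> x * y \<in> S"
  using assms unfolding subring_def by auto

lemma ms: assumes "mult_set R W"
  shows "W \<subseteq> R" "1 \<in> W" "w \<in> W \<Longrightarrow> w \<noteq> 0" "x \<in> W \<Longrightarrow> y \<in> W \<Longrightarrow> x * y \<in> W"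
  using assms unfolding mult_set_def by auto

lemma locI: "a \<in> R \<Longrightarrow> w \<in> W \<Longrightarrow> x = a / w \<Longrightarrow> x \<in> localization R W"
  unfolding localization_def by auto

lemma locE: "x \<in> localization R W \<Longrightarrow> (\<And>a w. a \<in> R \<Longrightarrow> w \<in> W \<Longrightarrow> x = a / w \<Longrightarrow> P) \<Longrightarrow> P"
  unfolding localization_def by auto

lemma sub_loc: assumes "mult_set R W" shows "R \<subseteq> localization R W"
proof
  fix x assume "x \<in> R" thus "x \<in> localization R W" using ms(2)[OF assms] by (intro locI[of x _ 1]) auto
qed

lemma inv_loc: assumes "subring R" "mult_set R W" "w \<in> W" shows "1 / w \<in> localization R W"
  using assms sr ms by (intro locI) auto

lemma subring_loc: assumes R: "subring R" and W: "mult_set R W" shows "subring (localization R W)"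
proof -
  have WR: "W \<subseteq> R" using ms[OF W] by auto
  { fix x y assume "x \<in> localization R W" "y \<in> localization R W"
    then obtain a w b v where ab: "a \<in> R" "w \<in> W" "x = a / w" "b \<in> R" "v \<in> W" "y = b / v"
      by (metis locE)
    have nz: "w \<noteq> 0" "v \<noteq> 0" using ab ms[OF W] by auto
    have wv: "w * v \<in> W" using ab ms[OF W] by auto
    have "x + y = (a * v + b * w) / (w * v)" using ab nz by (simp add: field_simps)
    moreover have "a * v + b * w \<in> R" using ab WR R sr by (meson subsetD)
    ultimately have 1: "x + y \<in> localization R W" using wv by (intro locI) auto
    have "x - y = (a * v - b * w) / (w * v)" using ab nz by (simp add: field_simps)
    moreover have "a * v - b * w \<in> R" using ab WR R sr by (meson subsetD)
    ultimately have 2: "x - y \<in> localization R W" using wv by (intro locI) auto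
    have "x * y = (a * b) / (w * v)" unfolding ab(3,6) using nz by simp
    moreover have "a * b \<in> R" using ab WR R sr by (meson subsetD)
    ultimately have 3: "x * y \<in> localization R W" using wv by (intro locI) auto
    note 1 2 3 }
  moreover have "0 \<in> localization R W" "1 \<in> localization R W"
    using sub_loc[OF W] sr[OF R] by auto
  ultimately show ?thesis unfolding subring_def by auto
qed

lemma frac_mono: "R \<subseteq> S \<Longrightarrow> frac R \<subseteq> frac S"
  unfolding frac_def by blast

lemma frac_loc: assumes R: "subring R" and W: "mult_set R W" shows "frac (localization R W) \<subseteq> frac R"
proof
  fix z assume "z \<in> frac (localization R W)"
  then obtain x y where xy: "x \<in> localization R W" "y \<in> localization R W" "y \<noteq> 0" "z = x / y"
    unfolding frac_def by auto
  then obtain a w b v where ab: "a \<in> R" "w \<in> W" "x = a / w" "b \<in> R" "v \<in> W" "y = b / v"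
    by (metis locE)
  have nz: "w \<noteq> 0" "v \<noteq> 0" "b \<noteq> 0" using ab ms[OF W] xy by auto
  have "z = (a * v) / (w * b)" unfolding xy(4) ab(3,6) using nz by (simp add: field_simps)
  moreover have "a * v \<in> R" "w * b \<in> R" "w * b \<noteq> 0" using ab nz ms[OF W] sr[OF R] by auto
  ultimately show "z \<in> frac R" unfolding frac_def by blast
qed

lemma idl: assumes "ideal_in S I"
  shows "I \<subseteq> S" "0 \<in> I" "x \<in> I \<Longrightarrow> y \<in> I \<Longrightarrow> x + y \<in> I" "s \<in> S \<Longrightarrow> x \<in> I \<Longrightarrow> s * x \<in> I"
  using assms unfolding ideal_in_def by auto

lemma one_notin: assumes "ideal_in S I" "I \<noteq> S" "subring S" shows "1 \<notin> I"
proof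
  assume "1 \<in> I"
  hence "S \<subseteq> I" using idl(4)[OF assms(1), of _ 1] by (metis mult.right_neutral subsetI)
  thus False using idl(1)[OF assms(1)] assms(2) by auto
qed

lemma contr_ideal: assumes "A \<subseteq> B" "ideal_in B Q" "0 \<in> A"
  "\<And>x y. x \<in> A \<Longrightarrow> y \<in> A \<Longrightarrow> x + y \<in> A" "\<And>x y. x \<in> A \<Longrightarrow> y \<in> A \<Longrightarrow> x * y \<in> A"
  shows "ideal_in A (Q \<inter> A)"
  unfolding ideal_in_def
proof (intro conjI ballI)
  show "Q \<inter> A \<subseteq> A" by auto
  show "0 \<in> Q \<inter> A" using idl(2)[OF assms(2)] assms(3) by auto
  fix x y assume "x \<in> Q \<inter> A" "y \<in> Q \<inter> A"
  thus "x + y \<in> Q \<inter> A" using idl(3)[OF assms(2)] assms(4) by auto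
next
  fix s x assume "s \<in> A" "x \<in> Q \<inter> A"
  thus "s * x \<in> Q \<inter> A" using idl(4)[OF assms(2)] assms(1,5) by auto
qed

lemma contr_prime: assumes "subring A" "A \<subseteq> B" "prime_ideal_in B Q" shows "prime_ideal_in A (Q \<inter> A)"
proof -
  have "ideal_in A (Q \<inter> A)" using assms(3) unfolding prime_ideal_in_def
    by (intro contr_ideal[OF assms(2)]) (auto intro: sr[OF assms(1)])
  moreover have "1 \<notin> Q \<inter> A" using assms(3) unfolding prime_ideal_in_def by auto
  moreover have "\<forall>a\<in>A. \<forall>b\<in>A. a * b \<in> Q \<inter> A \<longrightarrow> a \<in> Q \<inter> A \<or> b \<in> Q \<inter> A"
    using assms(2,3) unfolding prime_ideal_in_def by (meson IntD1 IntI subsetD)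
  ultimately show ?thesis unfolding prime_ideal_in_def by blast
qed

lemma ext_prime: assumes R: "subring R" and W: "mult_set R W" and p: "prime_ideal_in R p"
  and dis: "p \<inter> W = {}"
  shows "prime_ideal_in (localization R W) (localization p W)" "localization p W \<inter> R = p"
proof -
  have WR: "W \<subseteq> R" using ms[OF W] by auto
  have pR: "p \<subseteq> R" and p0: "0 \<in> p" using p unfolding prime_ideal_in_def ideal_in_def by auto
  have padd: "x \<in> p \<Longrightarrow> y \<in> p \<Longrightarrow> x + y \<in> p" for x y
    using p unfolding prime_ideal_in_def ideal_in_def by auto
  have pmul: "s \<in> R \<Longrightarrow> x \<in> p \<Longrightarrow> s * x \<in> p" for s x
    using p unfolding prime_ideal_in_def ideal_in_def by auto
  have pprime: "a \<in> R \<Longrightarrow> b \<in> R \<Longrightarrow> a * b \<in> p \<Longrightarrow> a \<in> p \<or> b \<in> p" for a b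
    using p unfolding prime_ideal_in_def by auto
  have p1: "1 \<notin> p" using p unfolding prime_ideal_in_def by auto
  let ?L = "localization R W" and ?p = "localization p W"
  have sub: "?p \<subseteq> ?L" using pR unfolding localization_def by auto
  have zero: "0 \<in> ?p" using p0 ms(2)[OF W] by (intro locI[of 0 _ 1]) auto
  have add: "x + y \<in> ?p" if H: "x \<in> ?p" "y \<in> ?p" for x y
  proof -
    obtain a w where "a \<in> p" "w \<in> W" "x = a / w" using H(1) by (rule locE)
    moreover obtain b v where "b \<in> p" "v \<in> W" "y = b / v" using H(2) by (rule locE)
    ultimately have ab: "a \<in> p" "w \<in> W" "x = a / w" "b \<in> p" "v \<in> W" "y = b / v" by auto
    have nz: "w \<noteq> 0" "v \<noteq> 0" using ab ms[OF W] by auto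
    have "x + y = (v * a + w * b) / (w * v)" using ab nz by (simp add: field_simps)
    moreover have "v * a + w * b \<in> p" using ab WR by (intro padd pmul) auto
    ultimately show ?thesis using ab ms(4)[OF W] by (intro locI) auto
  qed
  have mul: "s * x \<in> ?p" if H: "s \<in> ?L" "x \<in> ?p" for s x
  proof -
    obtain a w where "a \<in> R" "w \<in> W" "s = a / w" using H(1) by (rule locE)
    moreover obtain b v where "b \<in> p" "v \<in> W" "x = b / v" using H(2) by (rule locE)
    ultimately have ab: "a \<in> R" "w \<in> W" "s = a / w" "b \<in> p" "v \<in> W" "x = b / v" by auto
    have nz: "w \<noteq> 0" "v \<noteq> 0" using ab ms[OF W] by auto
    have "s * x = (a * b) / (w * v)" unfolding ab(3,6) using nz by simp
    moreover have "a * b \<in> p" using ab by (intro pmul) auto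
    ultimately show ?thesis using ab ms(4)[OF W] by (intro locI) auto
  qed
  have one: "1 \<notin> ?p"
  proof
    assume "1 \<in> ?p"
    then obtain a w where "a \<in> p" "w \<in> W" "1 = a / w" by (rule locE)
    moreover hence "w \<noteq> 0" using ms[OF W] by auto
    ultimately have "w = a" by (simp add: field_simps)
    hence "w \<in> p" using \<open>a \<in> p\<close> by simp
    thus False using \<open>w \<in> W\<close> dis by auto
  qed
  have contr: "?p \<inter> R = p"
  proof
    show "p \<subseteq> ?p \<inter> R" using pR ms(2)[OF W] by (auto intro: locI[of _ _ 1])
    show "?p \<inter> R \<subseteq> p"
    proof
      fix x assume "x \<in> ?p \<inter> R"
      hence xR: "x \<in> R" and xp: "x \<in> ?p" by auto
      from xp obtain c w where cw0: "c \<in> p" "w \<in> W" "x = c / w" by (rule locE)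
      have cw: "c \<in> p" "w \<in> W" "x = c / w" "x \<in> R" using cw0 xR by auto
      have "w \<noteq> 0" using cw ms[OF W] by auto
      hence "x * w = c" using cw by simp
      hence "x \<in> p \<or> w \<in> p" using cw WR by (intro pprime) auto
      thus "x \<in> p" using cw dis by auto
    qed
  qed
  have prm: "s \<in> ?p \<or> t \<in> ?p" if H: "s \<in> ?L" "t \<in> ?L" "s * t \<in> ?p" for s t
  proof -
    obtain a u where "a \<in> R" "u \<in> W" "s = a / u" using H(1) by (rule locE)
    moreover obtain b v where "b \<in> R" "v \<in> W" "t = b / v" using H(2) by (rule locE)
    ultimately have ab: "a \<in> R" "u \<in> W" "s = a / u" "b \<in> R" "v \<in> W" "t = b / v" by auto
    obtain c w where cw: "c \<in> p" "w \<in> W" "s * t = c / w" using H(3) by (rule locE)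
    have nz: "w \<noteq> 0" "v \<noteq> 0" "u \<noteq> 0" using ab cw ms[OF W] by auto
    have "(a / u) * (b / v) = c / w" using cw(3) ab(3,6) by simp
    hence "(a * b) * w = (u * v) * c" using nz by (simp add: field_simps)
    moreover have "u * v \<in> R" using ab WR sr(5)[OF R] by blast
    hence "(u * v) * c \<in> p" using cw by (intro pmul) auto
    ultimately have "a * b \<in> p \<or> w \<in> p" using ab cw WR sr[OF R] by (intro pprime) auto
    moreover have "w \<notin> p" using cw dis by auto
    ultimately have "a * b \<in> p" by simp
    hence "a \<in> p \<or> b \<in> p" using ab(1,4) pprime by blast
    thus ?thesis using ab by (auto intro: locI)
  qed
  have "ideal_in ?L ?p" unfolding ideal_in_def using sub zero add mul by simp
  thus "prime_ideal_in ?L ?p" unfolding prime_ideal_in_def using one prm by simp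
  show "?p \<inter> R = p" by (rule contr)
qed


lemma ideal_loc: assumes R: "subring R" and W: "mult_set R W" and I: "ideal_in (localization R W) I"
  shows "I = localization (I \<inter> R) W"
proof
  show "I \<subseteq> localization (I \<inter> R) W"
  proof
    fix x assume x: "x \<in> I"
    hence "x \<in> localization R W" using idl(1)[OF I] by auto
    then obtain a w where aw: "a \<in> R" "w \<in> W" "x = a / w" by (metis locE)
    have nz: "w \<noteq> 0" using aw ms[OF W] by auto
    have "w * x \<in> I" using idl(4)[OF I] x aw sub_loc[OF W] ms(1)[OF W] by blast
    moreover have "w * x = a" using aw nz by simp
    ultimately show "x \<in> localization (I \<inter> R) W" using aw by (auto intro: locI)
  qed
  show "localization (I \<inter> R) W \<subseteq> I"
  proof
    fix x assume "x \<in> localization (I \<inter> R) W"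
    then obtain a w where aw: "a \<in> I" "w \<in> W" "x = a / w" by (metis IntE locE)
    have "(1 / w) * a \<in> I" using idl(4)[OF I] aw inv_loc[OF R W] by blast
    thus "x \<in> I" using aw by simp
  qed
qed

lemma exists_max: assumes S: "subring S" and I: "ideal_in S I" "1 \<notin> I"
  shows "\<exists>M. maximal_ideal_in S M \<and> I \<subseteq> M"
proof -
  let ?A = "{J. ideal_in S J \<and> 1 \<notin> J \<and> I \<subseteq> J}"
  have "\<exists>M\<in>?A. \<forall>X\<in>?A. M \<subseteq> X \<longrightarrow> X = M"
  proof (rule Zorn_Lemma2, rule ballI)
    fix C assume C: "C \<in> chains ?A"
    show "\<exists>U\<in>?A. \<forall>X\<in>C. X \<subseteq> U"
    proof (cases "C = {}")
      case True thus ?thesis using I by auto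
    next
      case False
      have CA: "C \<subseteq> ?A" using chainsD2[OF C] .
      have "ideal_in S (\<Union>C)" unfolding ideal_in_def
      proof (intro conjI ballI)
        show "\<Union>C \<subseteq> S" using CA idl(1) by blast
        show "0 \<in> \<Union>C" using CA idl(2) False by blast
        fix x y assume "x \<in> \<Union>C" "y \<in> \<Union>C"
        then obtain X Y where "X \<in> C" "Y \<in> C" "x \<in> X" "y \<in> Y" by auto
        moreover from chainsD[OF C this(1,2)] have "X \<subseteq> Y \<or> Y \<subseteq> X" .
        ultimately show "x + y \<in> \<Union>C" using CA idl(3) by blast
      next
        fix s x assume "s \<in> S" "x \<in> \<Union>C"
        thus "s * x \<in> \<Union>C" using CA idl(4) by blast
      qed
      moreover have "1 \<notin> \<Union>C" "I \<subseteq> \<Union>C" using CA False by auto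
      ultimately show ?thesis by auto
    qed
  qed
  then obtain M where M: "M \<in> ?A" "\<forall>X\<in>?A. M \<subseteq> X \<longrightarrow> X = M" by blast
  have "maximal_ideal_in S M" unfolding maximal_ideal_in_def
  proof (intro conjI allI impI)
    show "ideal_in S M" using M by auto
    show "M \<noteq> S" using M sr(2)[OF S] by auto
    fix J assume J: "ideal_in S J \<and> M \<subseteq> J"
    show "J = M \<or> J = S"
    proof (cases "1 \<in> J")
      case True
      hence "S \<subseteq> J" using idl(4)[of S J _ 1] J by (metis mult.right_neutral subsetI)
      thus ?thesis using J idl(1) by blast
    next
      case False thus ?thesis using J M by auto
    qed
  qed
  thus ?thesis using M by auto
qed


lemma local_unit: assumes S: "subring S" and loc: "local_ring S" and M: "maximal_ideal_in S M"
  and x: "x \<in> S" "x \<notin> M" shows "x \<noteq> 0 \<and> 1 / x \<in> S"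
proof (rule ccontr)
  assume neg: "\<not> (x \<noteq> 0 \<and> 1 / x \<in> S)"
  have M0: "0 \<in> M" using M unfolding maximal_ideal_in_def ideal_in_def by auto
  hence x0: "x \<noteq> 0" using x by auto
  hence inv: "1 / x \<notin> S" using neg by auto
  let ?J = "{x * s | s. s \<in> S}"
  have J: "ideal_in S ?J" unfolding ideal_in_def
  proof (intro conjI ballI)
    show "?J \<subseteq> S" using x sr[OF S] by auto
    show "0 \<in> ?J" using sr(1)[OF S] by (auto intro!: exI[of _ 0])
    fix a b assume "a \<in> ?J" "b \<in> ?J"
    then obtain s t where "s \<in> S" "t \<in> S" "a = x * s" "b = x * t" by auto
    thus "a + b \<in> ?J" using sr(3)[OF S] by (auto simp: distrib_left intro!: exI[of _ "s + t"])
  next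
    fix r a assume "r \<in> S" "a \<in> ?J"
    then obtain s where "s \<in> S" "a = x * s" by auto
    thus "r * a \<in> ?J" using \<open>r \<in> S\<close> sr(5)[OF S] by (auto simp: ac_simps intro!: exI[of _ "r * s"])
  qed
  have "1 \<notin> ?J"
  proof
    assume "1 \<in> ?J"
    then obtain s where "s \<in> S" "1 = x * s" by auto
    hence "s = 1 / x" using x0 by (simp add: field_simps)
    thus False using inv \<open>s \<in> S\<close> by auto
  qed
  then obtain M' where M': "maximal_ideal_in S M'" "?J \<subseteq> M'" using exists_max[OF S J] by blast
  have "M' = M" using loc M M'(1) unfolding local_ring_def by auto
  moreover have "x \<in> ?J" using sr(2)[OF S] by (auto intro!: exI[of _ 1])
  ultimately show False using M' x by auto
qed

lemma max_comax: assumes R: "subring R" and m: "maximal_ideal_in R m" and x: "x \<in> R" "x \<notin> m"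
  shows "\<exists>a\<in>m. \<exists>r\<in>R. 1 = a + x * r"
proof -
  have mi: "ideal_in R m" using m unfolding maximal_ideal_in_def by auto
  let ?J = "{a + x * r | a r. a \<in> m \<and> r \<in> R}"
  have J: "ideal_in R ?J" unfolding ideal_in_def
  proof (intro conjI ballI)
    show "?J \<subseteq> R" using x sr[OF R] idl(1)[OF mi] by auto
    show "0 \<in> ?J" using sr(1)[OF R] idl(2)[OF mi] by (auto intro!: exI[of _ 0])
    fix u v assume "u \<in> ?J" "v \<in> ?J"
    then obtain a r b s where "a \<in> m" "r \<in> R" "b \<in> m" "s \<in> R" "u = a + x * r" "v = b + x * s" by auto
    moreover have "u + v = (a + b) + x * (r + s)" using calculation by (simp add: algebra_simps)
    moreover have "a + b \<in> m" "r + s \<in> R" using calculation idl(3)[OF mi] sr(3)[OF R] by auto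
    ultimately have "u + v = (a + b) + x * (r + s) \<and> a + b \<in> m \<and> r + s \<in> R" by simp
    thus "u + v \<in> ?J" by blast
  next
    fix t u assume "t \<in> R" "u \<in> ?J"
    then obtain a r where "a \<in> m" "r \<in> R" "u = a + x * r" by auto
    moreover have "t * u = t * a + x * (t * r)" using calculation by (simp add: algebra_simps)
    moreover have "t * a \<in> m" "t * r \<in> R" using calculation idl(4)[OF mi] sr(5)[OF R] \<open>t \<in> R\<close> by auto
    ultimately have "t * u = t * a + x * (t * r) \<and> t * a \<in> m \<and> t * r \<in> R" by simp
    thus "t * u \<in> ?J" by blast
  qed
  have "m \<subseteq> ?J"
  proof
    fix a assume "a \<in> m"
    hence "a = a + x * 0 \<and> a \<in> m \<and> (0::'a) \<in> R" using sr(1)[OF R] by simp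
    thus "a \<in> ?J" by blast
  qed
  moreover have "x = 0 + x * 1 \<and> (0::'a) \<in> m \<and> (1::'a) \<in> R" using sr[OF R] idl(2)[OF mi] by simp
  hence "x \<in> ?J" by blast
  moreover have "\<forall>J. ideal_in R J \<and> m \<subseteq> J \<longrightarrow> J = m \<or> J = R" using m unfolding maximal_ideal_in_def by simp
  ultimately have "?J = m \<or> ?J = R" using J by simp
  moreover have "?J \<noteq> m" using \<open>x \<in> ?J\<close> x(2) by blast
  ultimately have "?J = R" by blast
  hence "1 \<in> ?J" using sr(2)[OF R] by auto
  thus ?thesis by auto
qed

lemma max_mult_set: assumes R: "subring R" and m: "maximal_ideal_in R m" shows "mult_set R (R - m)"
proof -
  have mi: "ideal_in R m" and mne: "m \<noteq> R" using m unfolding maximal_ideal_in_def by auto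
  have one: "1 \<notin> m" using one_notin[OF mi mne R] .
  have "x * y \<notin> m" if xr: "x \<in> R" "x \<notin> m" "y \<in> R" "y \<notin> m" for x y
  proof
    assume xy: "x * y \<in> m"
    obtain a r where ar: "a \<in> m" "r \<in> R" "1 = a + x * r" using max_comax[OF R m xr(1,2)] by blast
    obtain b s where bs: "b \<in> m" "s \<in> R" "1 = b + y * s" using max_comax[OF R m xr(3,4)] by blast
    have "1 = (a + x * r) * (b + y * s)" using ar bs by simp
    also have "\<dots> = (b + y * s) * a + (x * r) * b + (r * s) * (x * y)" by (simp add: algebra_simps)
    finally have eq: "1 = (b + y * s) * a + (x * r) * b + (r * s) * (x * y)" .
    have bR: "b \<in> R" using bs(1) idl(1)[OF mi] by auto
    have "y * s \<in> R" using xr(3) bs(2) sr(5)[OF R] by blast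
    hence "b + y * s \<in> R" using bR sr(3)[OF R] by blast
    hence 1: "(b + y * s) * a \<in> m" using idl(4)[OF mi] ar(1) by auto
    have "x * r \<in> R" using xr ar sr(5)[OF R] by auto
    hence 2: "(x * r) * b \<in> m" using idl(4)[OF mi] bs(1) by auto
    have "r * s \<in> R" using ar bs sr(5)[OF R] by auto
    hence 3: "(r * s) * (x * y) \<in> m" using idl(4)[OF mi] xy by auto
    have "(b + y * s) * a + (x * r) * b + (r * s) * (x * y) \<in> m" using 1 2 3 idl(3)[OF mi] by auto
    hence "1 \<in> m" using eq by simp
    thus False using one by auto
  qed
  thus ?thesis unfolding mult_set_def using sr[OF R] one idl(2)[OF mi] by auto
qed



lemma part1: assumes R: "subring R" and per: "perinormal R" and W: "mult_set R W"
  shows "perinormal (localization R W)"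
proof -
  let ?L = "localization R W"
  have L: "subring ?L" by (rule subring_loc[OF R W])
  have RL: "R \<subseteq> ?L" by (rule sub_loc[OF W])
  have WR: "W \<subseteq> R" using ms(1)[OF W] .
  { fix S assume S: "subring S" "?L \<subseteq> S" "S \<subseteq> frac ?L" "local_ring S" "going_down ?L S"
    have RS: "R \<subseteq> S" using RL S(2) by auto
    have Sf: "S \<subseteq> frac R" using S(3) frac_loc[OF R W] by auto
    have invS: "1 / w \<in> S" if H: "w \<in> W" for w using inv_loc[OF R W H] S(2) by auto
    have gd: "going_down R S" unfolding going_down_def
    proof (intro allI impI, elim conjE)
      fix p q Q assume p: "prime_ideal_in R p" and q: "prime_ideal_in R q" and pq: "p \<subset> q"
        and Q: "prime_ideal_in S Q" and Qq: "Q \<inter> R = q"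
      have Qi: "ideal_in S Q" "1 \<notin> Q" using Q unfolding prime_ideal_in_def by auto
      have disq: "Q \<inter> W = {}"
      proof (rule ccontr)
        assume "Q \<inter> W \<noteq> {}" then obtain w where w: "w \<in> Q" "w \<in> W" by auto
        have "w \<noteq> 0" using w ms(3)[OF W] by auto
        have "(1 / w) * w \<in> Q" using idl(4)[OF Qi(1) invS[OF w(2)] w(1)] .
        thus False using \<open>w \<noteq> 0\<close> Qi(2) by simp
      qed
      have dis: "p \<inter> W = {}" using disq Qq pq WR by auto
      define p' where "p' = localization p W"
      define q' where "q' = Q \<inter> ?L"
      have p'P: "prime_ideal_in ?L p'" "p' \<inter> R = p" using ext_prime[OF R W p dis] p'_def by auto
      have q'P: "prime_ideal_in ?L q'" using contr_prime[OF L S(2) Q] q'_def by simp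
      have q'R: "q' \<inter> R = q" using Qq RL q'_def by auto
      have sub: "p' \<subseteq> q'"
      proof
        fix x assume xp: "x \<in> p'"
        then obtain c w where cw: "c \<in> p" "w \<in> W" "x = c / w" unfolding p'_def by (rule locE)
        have "c \<in> Q" using cw(1) pq Qq by auto
        hence "(1 / w) * c \<in> Q" using idl(4)[OF Qi(1) invS[OF cw(2)]] by blast
        moreover have "x \<in> ?L" using xp p'P(1) unfolding prime_ideal_in_def ideal_in_def by auto
        ultimately show "x \<in> q'" using cw(3) q'_def by simp
      qed
      have "p' \<noteq> q'" using p'P(2) q'R pq by auto
      hence "p' \<subset> q'" using sub by auto
      moreover have "Q \<inter> ?L = q'" using q'_def by simp
      ultimately obtain P where P: "prime_ideal_in S P" "P \<subseteq> Q" "P \<inter> ?L = p'"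
        using S(5) p'P(1) q'P Q unfolding going_down_def by blast
      have "P \<inter> R = p" using P(3) p'P(2) RL by auto
      thus "\<exists>P. prime_ideal_in S P \<and> P \<subseteq> Q \<and> P \<inter> R = p" using P by auto
    qed
    obtain V where V: "mult_set R V" "S = localization R V"
      using per S RS Sf gd unfolding perinormal_def by blast
    have "mult_set ?L V" using V(1) RL unfolding mult_set_def by auto
    moreover have "S = localization ?L V"
    proof
      show "S \<subseteq> localization ?L V" using V(2) RL unfolding localization_def by blast
      show "localization ?L V \<subseteq> S"
      proof
        fix x assume "x \<in> localization ?L V"
        then obtain y v where yv: "y \<in> ?L" "v \<in> V" "x = y / v" by (rule locE)
        have "1 / v \<in> S" using V(2) sr(2)[OF R] yv(2) by (auto intro: locI)
        moreover have "y \<in> S" using yv S(2) by auto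
        ultimately have "y * (1 / v) \<in> S" using sr(5)[OF S(1)] by blast
        thus "x \<in> S" using yv(3) by simp
      qed
    qed
    ultimately have "\<exists>V. mult_set ?L V \<and> S = localization ?L V" by blast }
  thus ?thesis unfolding perinormal_def using L by blast
qed

lemma part2: assumes R: "subring R"
  and H: "\<forall>m. maximal_ideal_in R m \<longrightarrow> perinormal (localization R (R - m))"
  shows "perinormal R"
proof -
  { fix S assume S: "subring S" "R \<subseteq> S" "S \<subseteq> frac R" "local_ring S" "going_down R S"
    obtain M where M: "maximal_ideal_in S M" using S(4) unfolding local_ring_def by blast
    have Mi: "ideal_in S M" and MS: "M \<noteq> S" using M unfolding maximal_ideal_in_def by auto
    have M1: "1 \<notin> M" using one_notin[OF Mi MS S(1)] .
    define p where "p = M \<inter> R"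
    have pi: "ideal_in R p" unfolding p_def by (rule contr_ideal[OF S(2) Mi]) (auto intro: sr[OF R])
    have p1: "1 \<notin> p" using M1 p_def by auto
    obtain m where m: "maximal_ideal_in R m" "p \<subseteq> m" using exists_max[OF R pi p1] by blast
    define W where "W = R - m"
    have W: "mult_set R W" using max_mult_set[OF R m(1)] W_def by simp
    let ?L = "localization R W"
    have perL: "perinormal ?L" using H m(1) W_def by simp
    have L: "subring ?L" by (rule subring_loc[OF R W])
    have RL: "R \<subseteq> ?L" by (rule sub_loc[OF W])
    have unit: "w \<noteq> 0 \<and> 1 / w \<in> S" if Hw: "w \<in> W" for w
    proof -
      have "w \<in> S" "w \<notin> M" using Hw W_def m(2) p_def S(2) by auto
      thus ?thesis using local_unit[OF S(1) S(4) M] by blast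
    qed
    have LS: "?L \<subseteq> S"
    proof
      fix x assume "x \<in> ?L"
      then obtain a w where aw: "a \<in> R" "w \<in> W" "x = a / w" by (rule locE)
      have "a * (1 / w) \<in> S" using unit[OF aw(2)] aw(1) S(2) sr(5)[OF S(1)] by blast
      thus "x \<in> S" using aw(3) by simp
    qed
    have SfL: "S \<subseteq> frac ?L" using S(3) frac_mono[OF RL] by auto
    have gd: "going_down ?L S" unfolding going_down_def
    proof (intro allI impI, elim conjE)
      fix p1 q1 Q assume p1: "prime_ideal_in ?L p1" and q1: "prime_ideal_in ?L q1" and pq: "p1 \<subset> q1"
        and Q: "prime_ideal_in S Q" and Qq: "Q \<inter> ?L = q1"
      have p1i: "ideal_in ?L p1" and q1i: "ideal_in ?L q1" using p1 q1 unfolding prime_ideal_in_def by auto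
      have pp: "prime_ideal_in R (p1 \<inter> R)" using contr_prime[OF R RL p1] .
      have qq: "prime_ideal_in R (q1 \<inter> R)" using contr_prime[OF R RL q1] .
      have e1: "p1 = localization (p1 \<inter> R) W" using ideal_loc[OF R W p1i] .
      have e2: "q1 = localization (q1 \<inter> R) W" using ideal_loc[OF R W q1i] .
      have "p1 \<inter> R \<noteq> q1 \<inter> R"
      proof
        assume "p1 \<inter> R = q1 \<inter> R"
        hence "p1 = q1" using e1 e2 by metis
        thus False using pq by simp
      qed
      hence "p1 \<inter> R \<subset> q1 \<inter> R" using pq by auto
      moreover have "Q \<inter> R = q1 \<inter> R" using Qq RL by auto
      ultimately obtain P where P: "prime_ideal_in S P" "P \<subseteq> Q" "P \<inter> R = p1 \<inter> R"
        using S(5) pp qq Q unfolding going_down_def by blast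
      have PL: "prime_ideal_in ?L (P \<inter> ?L)" using contr_prime[OF L LS P(1)] .
      hence "ideal_in ?L (P \<inter> ?L)" unfolding prime_ideal_in_def by simp
      hence "P \<inter> ?L = localization ((P \<inter> ?L) \<inter> R) W" using ideal_loc[OF R W] by blast
      also have "(P \<inter> ?L) \<inter> R = P \<inter> R" using RL by auto
      finally have "P \<inter> ?L = p1" using P(3) e1 by simp
      thus "\<exists>P. prime_ideal_in S P \<and> P \<subseteq> Q \<and> P \<inter> ?L = p1" using P by blast
    qed
    obtain V where V: "mult_set ?L V" "S = localization ?L V"
      using perL S(1) LS SfL S(4) gd unfolding perinormal_def by blast
    define V' where "V' = {x \<in> R. x \<noteq> 0 \<and> 1 / x \<in> S}"
    have "x * y \<in> V'" if Hxy: "x \<in> V'" "y \<in> V'" for x y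
    proof -
      have "1 / x \<in> S" "1 / y \<in> S" using Hxy unfolding V'_def by auto
      from sr(5)[OF S(1) this] have "(1 / x) * (1 / y) \<in> S" .
      hence "1 / (x * y) \<in> S" by simp
      thus ?thesis using Hxy sr(5)[OF R] unfolding V'_def by auto
    qed
    hence V': "mult_set R V'" unfolding mult_set_def using sr(2)[OF R] sr(2)[OF S(1)]
      unfolding V'_def by auto
    have "S = localization R V'"
    proof
      show "localization R V' \<subseteq> S"
      proof
        fix x assume "x \<in> localization R V'"
        then obtain a v where av: "a \<in> R" "v \<in> V'" "x = a / v" by (rule locE)
        have "a \<in> S" "1 / v \<in> S" using av S(2) unfolding V'_def by auto
        from sr(5)[OF S(1) this] have "a * (1 / v) \<in> S" .
        thus "x \<in> S" using av by simp
      qed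
      show "S \<subseteq> localization R V'"
      proof
        fix s assume "s \<in> S"
        hence "s \<in> localization ?L V" using V(2) by simp
        then obtain y v where yv: "y \<in> ?L" "v \<in> V" "s = y / v" by (rule locE)
        obtain b u where bu: "b \<in> R" "u \<in> W" "y = b / u" using yv(1) by (rule locE)
        have "v \<in> ?L" using yv(2) ms(1)[OF V(1)] by auto
        then obtain a w where aw: "a \<in> R" "w \<in> W" "v = a / w" by (rule locE)
        have v0: "v \<noteq> 0" using yv(2) ms(3)[OF V(1)] by auto
        have u0: "u \<noteq> 0" and w0: "w \<noteq> 0" using bu(2) aw(2) ms(3)[OF W] by auto
        have a0: "a \<noteq> 0" using v0 aw(3) by auto
        have seq: "s = (b * w) / (u * a)" unfolding yv(3) bu(3) aw(3) using u0 w0 a0 by (simp add: field_simps)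
        have ieq: "1 / (u * a) = (1 / u) * ((1 / v) * (1 / w))" unfolding aw(3) using u0 w0 a0 by (simp add: field_simps)
        have iv: "1 / v \<in> S" using V(2) yv(2) sr(2)[OF L] by (auto intro: locI)
        have "1 / u \<in> S" "1 / w \<in> S" using unit[OF bu(2)] unit[OF aw(2)] by auto
        hence "(1 / u) * ((1 / v) * (1 / w)) \<in> S" using iv sr(5)[OF S(1)] by blast
        hence "1 / (u * a) \<in> S" unfolding ieq .
        moreover have "u * a \<in> R" "u * a \<noteq> 0" using bu(2) aw(1) W_def sr(5)[OF R] u0 a0 by auto
        ultimately have "u * a \<in> V'" unfolding V'_def by auto
        moreover have "b * w \<in> R" using bu(1) aw(2) W_def sr(5)[OF R] by auto
        ultimately show "s \<in> localization R V'" using seq by (auto intro: locI)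
      qed
    qed
    hence "\<exists>V. mult_set R V \<and> S = localization R V" using V' by blast }
  thus ?thesis unfolding perinormal_def using R by blast
qed


theorem proposition2p5:
  fixes R :: "'a::field set"
  assumes "subring R"
  shows "(perinormal R \<longrightarrow> (\<forall>W. mult_set R W \<longrightarrow> perinormal (localization R W)))
       \<and> ((\<forall>m. maximal_ideal_in R m \<longrightarrow> perinormal (localization R (R - m)))
            \<longrightarrow> perinormal R)"
  using part1[OF assms] part2[OF assms] by blast

end
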